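(* Let $F:(0,\infty)\to(0,\infty)$ be strictly decreasing and let $(x_n)_{n\in\mathbb Z}$ be an equilibrium configuration for $F$. Suppose that some gap is maximal, i.e. there is $k\in\mathbb Z$ with $x_{k+1}-x_k\ge x_{m+1}-x_m$ for all $m\in\mathbb Z$, or that some gap is minimal, i.e. there is $k$ with $x_{k+1}-x_k\le x_{m+1}-x_m$ for all $m\in\mathbb Z$. Then the configuration is trivial, i.e. $x_{n+1}-x_n$ is independent of $n$.
   Context: A force law is a strictly decreasing function $F:(0,\infty)\to(0,\infty)$; two particles at distance $d$ repel each other with force of magnitude $F(d)$. A configuration is a strictly increasing bi-infinite sequence $(x_n)_{n\in\mathbb Z}$ of reals (particle positions). The particle at $x_n$ is in equilibrium if the force from the left $\sum_{m<n}F(x_n-x_m)$ and the force from the right $\sum_{m>n}F(x_m-x_n)$ are both finite and equal. An equilibrium configuration is a configuration in which every particle is in equilibrium. It is trivial if it is an arithmetic progression, i.e. $x_{n+1}-x_n$ is constant. The numbers $x_{n+1}-x_n$ are called gaps. *)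

theory Defs
  imports "HOL-Analysis.Analysis"
begin

definition force_law :: "(real \<Rightarrow> real) \<Rightarrow> bool" where
  "force_law F \<longleftrightarrow> (\<forall>d>0. F d > 0) \<and> strict_antimono_on {0<..} F"

definition configuration :: "(int \<Rightarrow> real) \<Rightarrow> bool" where
  "configuration x \<longleftrightarrow> strict_mono x"

definition in_equilibrium :: "(real \<Rightarrow> real) \<Rightarrow> (int \<Rightarrow> real) \<Rightarrow> int \<Rightarrow> bool" where
  "in_equilibrium F x n \<longleftrightarrow>
     (\<lambda>m. F (x n - x m)) summable_on {..<n} \<and>
     (\<lambda>m. F (x m - x n)) summable_on {n<..} \<and>
     (\<Sum>\<^sub>\<infinity>m\<in>{..<n}. F (x n - x m)) = (\<Sum>\<^sub>\<infinity>m\<in>{n<..}. F (x m - x n))"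

definition equilibrium_configuration :: "(real \<Rightarrow> real) \<Rightarrow> (int \<Rightarrow> real) \<Rightarrow> bool" where
  "equilibrium_configuration F x \<longleftrightarrow> configuration x \<and> (\<forall>n. in_equilibrium F x n)"

definition trivial_configuration :: "(int \<Rightarrow> real) \<Rightarrow> bool" where
  "trivial_configuration x \<longleftrightarrow> (\<exists>c. \<forall>n. x (n + 1) - x n = c)"

end

theory Submission
  imports Defs
begin

lemma termwise_eq:
  fixes f g :: "'a \<Rightarrow> real"
  assumes "f summable_on A" "g summable_on A" "\<And>a. a \<in> A \<Longrightarrow> f a \<le> g a"
    "infsum g A \<le> infsum f A" "a \<in> A"
  shows "f a = g a"
proof (rule ccontr)
  assume "f a \<noteq> g a"
  with assms have "f a < g a" by force
  have "infsum f A < infsum g A"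
    by (rule has_sum_strict_mono[OF has_sum_infsum[OF assms(1)] has_sum_infsum[OF assms(2)]])
       (use assms \<open>f a < g a\<close> in auto)
  with assms(4) show False by simp
qed

lemma F_inj:
  assumes "force_law F" "a > 0" "b > 0" "F a = F b"
  shows "a = b"
proof (rule ccontr)
  assume "a \<noteq> b"
  then consider "a < b" | "b < a" by linarith
  then show False
  proof cases
    case 1
    with assms have "F b < F a" unfolding force_law_def monotone_on_def by (meson greaterThan_iff)
    with assms show False by simp
  next
    case 2
    with assms have "F a < F b" unfolding force_law_def monotone_on_def by (meson greaterThan_iff)
    with assms show False by simp
  qed
qed

lemma F_anti:
  assumes "force_law F" "a > 0" "b > 0" "a \<le> b"
  shows "F b \<le> F a"
proof (cases "a = b")
  case False
  with assms have "F b < F a" unfolding force_law_def monotone_on_def by auto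
  then show ?thesis by simp
qed simp

lemma main_core:
  fixes F :: "real \<Rightarrow> real" and x :: "int \<Rightarrow> real"
  assumes FL: "force_law F"
    and EQ: "equilibrium_configuration F x"
    and G: "(\<forall>m. x (k + 1) - x k \<ge> x (m + 1) - x m) \<or> (\<forall>m. x (k + 1) - x k \<le> x (m + 1) - x m)"
  shows "x (m + 1) - x m = x (k + 1) - x k"
proof -
  have sm: "strict_mono x" using EQ unfolding equilibrium_configuration_def configuration_def by auto
  have pos: "x a - x b > 0" if "b < a" for a b using sm that by (simp add: strict_mono_less)
  have xlt[simp]: "x b < x a \<longleftrightarrow> b < a" for a b using sm by (simp add: strict_mono_less)
  have e0: "in_equilibrium F x k" and e1: "in_equilibrium F x (k+1)"
    using EQ unfolding equilibrium_configuration_def by auto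
  have bR: "bij_betw (\<lambda>m. m + 1) {k<..} {k+1<..}"
    by (rule bij_betwI[where g="\<lambda>m. m - 1"]) auto
  have bL: "bij_betw (\<lambda>m. m + 1) {..<k} {..<k+1}"
    by (rule bij_betwI[where g="\<lambda>m. m - 1"]) auto
  define r0 where "r0 = (\<lambda>m. F (x m - x k))"
  define r1 where "r1 = (\<lambda>m. F (x (m+1) - x (k+1)))"
  define l0 where "l0 = (\<lambda>m. F (x k - x m))"
  define l1 where "l1 = (\<lambda>m. F (x (k+1) - x (m+1)))"
  have sr0: "r0 summable_on {k<..}" and sl0: "l0 summable_on {..<k}"
    and eq0: "infsum l0 {..<k} = infsum r0 {k<..}"
    using e0 unfolding in_equilibrium_def r0_def l0_def by auto
  have sr1': "(\<lambda>m. F (x m - x (k+1))) summable_on {k+1<..}"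
    and sl1': "(\<lambda>m. F (x (k+1) - x m)) summable_on {..<k+1}"
    and eq1': "(\<Sum>\<^sub>\<infinity>m\<in>{..<k+1}. F (x (k+1) - x m)) = (\<Sum>\<^sub>\<infinity>m\<in>{k+1<..}. F (x m - x (k+1)))"
    using e1 unfolding in_equilibrium_def by auto
  have sr1: "r1 summable_on {k<..}"
    unfolding r1_def using summable_on_reindex_bij_betw[OF bR, of "\<lambda>m. F (x m - x (k+1))"] sr1' by simp
  have sl1: "l1 summable_on {..<k}"
    unfolding l1_def using summable_on_reindex_bij_betw[OF bL, of "\<lambda>m. F (x (k+1) - x m)"] sl1' by simp
  have ir1: "infsum r1 {k<..} = (\<Sum>\<^sub>\<infinity>m\<in>{k+1<..}. F (x m - x (k+1)))"
    unfolding r1_def using infsum_reindex_bij_betw[OF bR, of "\<lambda>m. F (x m - x (k+1))"] by simp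
  have il1: "infsum l1 {..<k} = (\<Sum>\<^sub>\<infinity>m\<in>{..<k+1}. F (x (k+1) - x m))"
    unfolding l1_def using infsum_reindex_bij_betw[OF bL, of "\<lambda>m. F (x (k+1) - x m)"] by simp
  have eq1: "infsum l1 {..<k} = infsum r1 {k<..}" using ir1 il1 eq1' by simp
  have goal_m: ?thesis if "m \<noteq> k"
  proof (cases "m < k")
    case True
    have eqv: "l0 m = l1 m" using G
    proof
      assume H: "\<forall>m. x (m + 1) - x m \<le> x (k + 1) - x k"
      have a: "l1 a \<le> l0 a" if "a \<in> {..<k}" for a
        unfolding l0_def l1_def using that H[rule_format, of a] by (intro F_anti[OF FL]) auto
      have b: "r0 a \<le> r1 a" if "a \<in> {k<..}" for a
        unfolding r0_def r1_def using that H[rule_format, of a] by (intro F_anti[OF FL]) auto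
      have "infsum l1 {..<k} \<le> infsum l0 {..<k}" by (rule infsum_mono[OF sl1 sl0 a])
      moreover have "infsum r0 {k<..} \<le> infsum r1 {k<..}" by (rule infsum_mono[OF sr0 sr1 b])
      ultimately have "infsum l0 {..<k} \<le> infsum l1 {..<k}" using eq0 eq1 by linarith
      then show ?thesis using termwise_eq[OF sl1 sl0 a] True by fastforce
    next
      assume H: "\<forall>m. x (m + 1) - x m \<ge> x (k + 1) - x k"
      have a: "l0 a \<le> l1 a" if "a \<in> {..<k}" for a
        unfolding l0_def l1_def using that H[rule_format, of a] by (intro F_anti[OF FL]) auto
      have b: "r1 a \<le> r0 a" if "a \<in> {k<..}" for a
        unfolding r0_def r1_def using that H[rule_format, of a] by (intro F_anti[OF FL]) auto
      have "infsum l0 {..<k} \<le> infsum l1 {..<k}" by (rule infsum_mono[OF sl0 sl1 a])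
      moreover have "infsum r1 {k<..} \<le> infsum r0 {k<..}" by (rule infsum_mono[OF sr1 sr0 b])
      ultimately have "infsum l1 {..<k} \<le> infsum l0 {..<k}" using eq0 eq1 by linarith
      then show ?thesis using termwise_eq[OF sl0 sl1 a] True by fastforce
    qed
    have "x k - x m = x (k+1) - x (m+1)"
      using F_inj[OF FL _ _ eqv[unfolded l0_def l1_def]] True pos by auto
    then show ?thesis by linarith
  next
    case False
    with that have mk: "m > k" by simp
    have eqv: "r0 m = r1 m" using G
    proof
      assume H: "\<forall>m. x (m + 1) - x m \<le> x (k + 1) - x k"
      have a: "l1 a \<le> l0 a" if "a \<in> {..<k}" for a
        unfolding l0_def l1_def using that H[rule_format, of a] by (intro F_anti[OF FL]) auto
      have b: "r0 a \<le> r1 a" if "a \<in> {k<..}" for a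
        unfolding r0_def r1_def using that H[rule_format, of a] by (intro F_anti[OF FL]) auto
      have "infsum l1 {..<k} \<le> infsum l0 {..<k}" by (rule infsum_mono[OF sl1 sl0 a])
      moreover have "infsum r0 {k<..} \<le> infsum r1 {k<..}" by (rule infsum_mono[OF sr0 sr1 b])
      ultimately have "infsum r1 {k<..} \<le> infsum r0 {k<..}" using eq0 eq1 by linarith
      then show ?thesis using termwise_eq[OF sr0 sr1 b] mk by fastforce
    next
      assume H: "\<forall>m. x (m + 1) - x m \<ge> x (k + 1) - x k"
      have a: "l0 a \<le> l1 a" if "a \<in> {..<k}" for a
        unfolding l0_def l1_def using that H[rule_format, of a] by (intro F_anti[OF FL]) auto
      have b: "r1 a \<le> r0 a" if "a \<in> {k<..}" for a
        unfolding r0_def r1_def using that H[rule_format, of a] by (intro F_anti[OF FL]) auto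
      have "infsum l0 {..<k} \<le> infsum l1 {..<k}" by (rule infsum_mono[OF sl0 sl1 a])
      moreover have "infsum r1 {k<..} \<le> infsum r0 {k<..}" by (rule infsum_mono[OF sr1 sr0 b])
      ultimately have "infsum r0 {k<..} \<le> infsum r1 {k<..}" using eq0 eq1 by linarith
      then show ?thesis using termwise_eq[OF sr1 sr0 b] mk by fastforce
    qed
    have "x m - x k = x (m+1) - x (k+1)"
      using F_inj[OF FL _ _ eqv[unfolded r0_def r1_def]] mk pos by auto
    then show ?thesis by linarith
  qed
  show ?thesis by (cases "m = k") (use goal_m in auto)
qed

theorem mainTheorem1:
  fixes F :: "real \<Rightarrow> real" and x :: "int \<Rightarrow> real"
  assumes "force_law F"
    and "equilibrium_configuration F x"
    and "(\<exists>k. \<forall>m. x (k + 1) - x k \<ge> x (m + 1) - x m) \<or>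
         (\<exists>k. \<forall>m. x (k + 1) - x k \<le> x (m + 1) - x m)"
  shows "trivial_configuration x"
proof -
  obtain k where "(\<forall>m. x (k + 1) - x k \<ge> x (m + 1) - x m) \<or> (\<forall>m. x (k + 1) - x k \<le> x (m + 1) - x m)"
    using assms(3) by blast
  from main_core[OF assms(1,2) this] show ?thesis
    unfolding trivial_configuration_def by blast
qed

end
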